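(* Let $(N^\circ,M^\circ,L^\circ)\in OLag(V)^3$ be pairwise in general position, let $r^L:M\to N$ be the linear map with $r^L(m)-m\in L$ for all $m\in M$, and $r^L_\wedge:\bigwedge^nM\to\bigwedge^nN$ the induced map. Then $$\omega_\wedge\big(r^L_\wedge(o_M),o_M\big)=(-1)^n\,\omega_\wedge(o_M,o_N)\,\omega_\wedge(o_L,o_M)\,\omega_\wedge(o_L,o_N)^{-1}.$$
   Context: $(V,\omega)$ is a symplectic vector space of dimension $2n$ over $\mathbb F_q$, $q$ odd. An oriented Lagrangian is a pair $L^\circ=(L,o_L)$ with $L$ Lagrangian and $o_L\in\bigwedge^nL$ nonzero; $OLag(V)$ is the set of these. Lagrangians $M,L$ are in general position if $M+L=V$. For Lagrangians $A,B$ in a $2k$-dimensional symplectic space, $\omega_\wedge:\bigwedge^kA\times\bigwedge^kB\to\mathbb F_q$ is $\omega_\wedge(a_1\wedge\dots\wedge a_k,b_1\wedge\dots\wedge b_k)=(-1)^{k(k-1)/2}\det(\omega(a_i,b_j))_{i,j}$. *)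

theory Defs
  imports "HOL-Analysis.Analysis"
begin

text \<open>The symplectic space V is modelled as 'a^'m over a finite field 'a of odd order,
  with CARD('m) = 2n.  Bases of n-dimensional (Lagrangian) subspaces are indexed by a
  finite type 'n with CARD('n) = n.\<close>

definition symplectic_form :: "('a::field^'m \<Rightarrow> 'a^'m \<Rightarrow> 'a) \<Rightarrow> bool" where
  "symplectic_form \<omega> \<longleftrightarrow>
     (\<forall>x y z. \<omega> (x + y) z = \<omega> x z + \<omega> y z) \<and>
     (\<forall>x y z. \<omega> x (y + z) = \<omega> x y + \<omega> x z) \<and>
     (\<forall>c x y. \<omega> (c *s x) y = c * \<omega> x y) \<and>
     (\<forall>c x y. \<omega> x (c *s y) = c * \<omega> x y) \<and>
     (\<forall>x. \<omega> x x = 0) \<and>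
     (\<forall>x. (\<forall>y. \<omega> x y = 0) \<longrightarrow> x = 0)"

definition lagrangian :: "('a::field^'m \<Rightarrow> 'a^'m \<Rightarrow> 'a) \<Rightarrow> ('a^'m) set \<Rightarrow> bool" where
  "lagrangian \<omega> L \<longleftrightarrow> vec.subspace L \<and> 2 * vec.dim L = CARD('m) \<and>
     (\<forall>x\<in>L. \<forall>y\<in>L. \<omega> x y = 0)"

text \<open>An orientation o_L (a nonzero element of the top exterior power of L) is represented
  by an ordered basis b of L, standing for b_1 \<and> ... \<and> b_n.\<close>

definition ordered_basis_of :: "('a::field^'m) set \<Rightarrow> ('n::finite \<Rightarrow> 'a^'m) \<Rightarrow> bool" where
  "ordered_basis_of L b \<longleftrightarrow> inj b \<and> vec.independent (range b) \<and> vec.span (range b) = L"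

definition oriented_lagrangian ::
  "('a::field^'m \<Rightarrow> 'a^'m \<Rightarrow> 'a) \<Rightarrow> ('a^'m) set \<Rightarrow> ('n::finite \<Rightarrow> 'a^'m) \<Rightarrow> bool" where
  "oriented_lagrangian \<omega> L b \<longleftrightarrow> lagrangian \<omega> L \<and> ordered_basis_of L b"

definition general_position :: "('a::field^'m) set \<Rightarrow> ('a^'m) set \<Rightarrow> bool" where
  "general_position L M \<longleftrightarrow> {x + y | x y. x \<in> L \<and> y \<in> M} = UNIV"

definition omega_wedge ::
  "('a::field^'m \<Rightarrow> 'a^'m \<Rightarrow> 'a) \<Rightarrow> ('n::finite \<Rightarrow> 'a^'m) \<Rightarrow> ('n \<Rightarrow> 'a^'m) \<Rightarrow> 'a" where
  "omega_wedge \<omega> a b =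
     (-1) ^ (CARD('n) * (CARD('n) - 1) div 2) * det (\<chi> i j. \<omega> (a i) (b j))"

end

theory Submission
  imports Defs
begin

lemma om_add_left: "symplectic_form \<omega> \<Longrightarrow> \<omega> (x + y) z = \<omega> x z + \<omega> y z"
  by (simp add: symplectic_form_def)
lemma om_add_right: "symplectic_form \<omega> \<Longrightarrow> \<omega> z (x + y) = \<omega> z x + \<omega> z y"
  by (simp add: symplectic_form_def)
lemma om_scale_left: "symplectic_form \<omega> \<Longrightarrow> \<omega> (c *s x) z = c * \<omega> x z"
  by (simp add: symplectic_form_def)
lemma om_scale_right: "symplectic_form \<omega> \<Longrightarrow> \<omega> z (c *s x) = c * \<omega> z x"
  by (simp add: symplectic_form_def)
lemma om_zero_left:
  assumes "symplectic_form \<omega>" shows "\<omega> 0 y = 0"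
proof -
  have "\<omega> 0 y + 0 = \<omega> 0 y + \<omega> 0 y"
    using om_add_left[OF assms, of 0 0 y] by simp
  then show ?thesis by (rule add_left_imp_eq[symmetric])
qed
lemma om_zero_right:
  assumes "symplectic_form \<omega>" shows "\<omega> x 0 = 0"
proof -
  have "\<omega> x 0 + 0 = \<omega> x 0 + \<omega> x 0"
    using om_add_right[OF assms, of x 0 0] by simp
  then show ?thesis by (rule add_left_imp_eq[symmetric])
qed
lemma om_diff_left:
  assumes "symplectic_form \<omega>" shows "\<omega> (x - y) z = \<omega> x z - \<omega> y z"
proof -
  have "\<omega> x z = \<omega> (x - y) z + \<omega> y z"
    using om_add_left[OF assms, of "x - y" y z] by simp
  then show ?thesis by (simp add: algebra_simps)
qed

lemma om_sum_left:
  assumes "symplectic_form \<omega>" "finite S"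
  shows "\<omega> (\<Sum>i\<in>S. f i) y = (\<Sum>i\<in>S. \<omega> (f i) y)"
  using assms(2)
proof induct
  case empty then show ?case by (simp add: om_zero_left[OF assms(1)])
next
  case (insert x F) then show ?case by (simp add: om_add_left[OF assms(1)])
qed

lemma om_sum_right:
  assumes "symplectic_form \<omega>" "finite S"
  shows "\<omega> y (\<Sum>i\<in>S. f i) = (\<Sum>i\<in>S. \<omega> y (f i))"
  using assms(2)
proof induct
  case empty then show ?case by (simp add: om_zero_right[OF assms(1)])
next
  case (insert x F) then show ?case by (simp add: om_add_right[OF assms(1)])
qed

lemma span_repr:
  fixes b :: "'n::finite \<Rightarrow> 'a::field^'m"
  assumes "inj b" "x \<in> vec.span (range b)"
  shows "\<exists>c. x = (\<Sum>p\<in>UNIV. c p *s b p)"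
proof -
  obtain u where "x = (\<Sum>v\<in>range b. u v *s v)"
    using assms(2) vec.span_finite[of "range b"] by auto
  also have "\<dots> = (\<Sum>p\<in>UNIV. u (b p) *s b p)"
    using sum.reindex[OF assms(1), of "\<lambda>v. u v *s v"] by simp
  finally show ?thesis by (rule exI[of _ "\<lambda>p. u (b p)"])
qed

lemma indep_repr:
  fixes b :: "'n::finite \<Rightarrow> 'a::field^'m"
  assumes "inj b" "vec.independent (range b)" "(\<Sum>p\<in>UNIV. x p *s b p) = 0"
  shows "x p = 0"
proof -
  let ?u = "\<lambda>v. x (inv b v)"
  have "(\<Sum>v\<in>range b. ?u v *s v) = (\<Sum>p\<in>UNIV. ?u (b p) *s b p)"
    using sum.reindex[OF assms(1), of "\<lambda>v. ?u v *s v"] by simp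
  also have "\<dots> = 0" using assms(1,3) by simp
  finally have "?u (b p) = 0"
    using vec.independentD[OF assms(2), of "range b" ?u "b p"] by simp
  then show ?thesis using assms(1) by simp
qed

lemma det_neg_mat:
  fixes X :: "'a::comm_ring_1^'n::finite^'n"
  shows "det (\<chi> i j. - (X$i$j)) = (-1) ^ CARD('n) * det X"
proof -
  have "(\<chi> i j. - (X$i$j)) = (\<chi> i. (-1) *s (X$i))"
    by (simp add: vec_eq_iff)
  then show ?thesis using det_rows_mul[of "\<lambda>i. -1" "\<lambda>i. X$i"] by simp
qed

theorem mainTheorem4:
  fixes \<omega> :: "'a::{field,finite}^'m \<Rightarrow> 'a^'m \<Rightarrow> 'a"
    and N M L :: "('a^'m) set"
    and oN oM oL :: "'n::finite \<Rightarrow> 'a^'m"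
    and r :: "'a^'m \<Rightarrow> 'a^'m"
  assumes "odd CARD('a)"
    and "CARD('m) = 2 * CARD('n)"
    and "symplectic_form \<omega>"
    and "oriented_lagrangian \<omega> N oN"
    and "oriented_lagrangian \<omega> M oM"
    and "oriented_lagrangian \<omega> L oL"
    and "general_position N M" and "general_position M L" and "general_position N L"
    and "\<forall>m\<in>M. r m \<in> N \<and> r m - m \<in> L"
  shows "omega_wedge \<omega> (r \<circ> oM) oM =
    (-1) ^ CARD('n) * omega_wedge \<omega> oM oN * omega_wedge \<omega> oL oM
      * inverse (omega_wedge \<omega> oL oN)"
proof -
  note sf = assms(3)
  have N: "inj oN" "vec.independent (range oN)" "vec.span (range oN) = N" "\<forall>x\<in>N. \<forall>y\<in>N. \<omega> x y = 0"
    using assms(4) unfolding oriented_lagrangian_def ordered_basis_of_def lagrangian_def by auto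
  have M: "inj oM" "vec.independent (range oM)" "vec.span (range oM) = M" "\<forall>x\<in>M. \<forall>y\<in>M. \<omega> x y = 0"
    using assms(5) unfolding oriented_lagrangian_def ordered_basis_of_def lagrangian_def by auto
  have L: "inj oL" "vec.independent (range oL)" "vec.span (range oL) = L" "\<forall>x\<in>L. \<forall>y\<in>L. \<omega> x y = 0"
    using assms(6) unfolding oriented_lagrangian_def ordered_basis_of_def lagrangian_def by auto
  have oMin: "oM i \<in> M" for i using vec.span_base[of "oM i" "range oM"] M(3) by simp
  have oNin: "oN i \<in> N" for i using vec.span_base[of "oN i" "range oN"] N(3) by simp
  have oLin: "oL i \<in> L" for i using vec.span_base[of "oL i" "range oL"] L(3) by simp
  have "\<forall>i. \<exists>c. r (oM i) - oM i = (\<Sum>p\<in>UNIV. c p *s oL p)"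
  proof
    fix i
    have "r (oM i) - oM i \<in> vec.span (range oL)" using L(3) assms(10) oMin by simp
    then show "\<exists>c. r (oM i) - oM i = (\<Sum>p\<in>UNIV. c p *s oL p)" by (rule span_repr[OF L(1)])
  qed
  then have "\<exists>c. \<forall>i. r (oM i) - oM i = (\<Sum>p\<in>UNIV. c i p *s oL p)" by (rule choice)
  then obtain c where c0: "\<forall>i. r (oM i) - oM i = (\<Sum>p\<in>UNIV. c i p *s oL p)" by (elim exE)
  have c: "r (oM i) - oM i = (\<Sum>p\<in>UNIV. c i p *s oL p)" for i using c0 by (rule spec)
  define C where "C = (\<chi> i p. c i p)"
  define BLM where "BLM = (\<chi> i j. \<omega> (oL i) (oM j))"
  define BLN where "BLN = (\<chi> i j. \<omega> (oL i) (oN j))"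
  define BMN where "BMN = (\<chi> i j. \<omega> (oM i) (oN j))"
  define A where "A = (\<chi> i j. \<omega> ((r \<circ> oM) i) (oM j))"
  have lsum: "\<omega> (r (oM i) - oM i) y = (\<Sum>p\<in>UNIV. c i p * \<omega> (oL p) y)" for i y
    by (simp add: c om_sum_left[OF sf] om_scale_left[OF sf])
  have A: "A = C ** BLM"
  proof -
    have "\<omega> (r (oM i)) (oM j) = \<omega> (r (oM i) - oM i) (oM j)" for i j
      using om_diff_left[OF sf, of "r (oM i)" "oM i" "oM j"] M(4) oMin by simp
    then show ?thesis
      by (simp add: A_def C_def BLM_def matrix_matrix_mult_def lsum)
  qed
  have B: "(\<chi> i j. - (BMN$i$j)) = C ** BLN"
  proof -
    have "- \<omega> (oM i) (oN j) = \<omega> (r (oM i) - oM i) (oN j)" for i j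
      using om_diff_left[OF sf, of "r (oM i)" "oM i" "oN j"] N(4) oNin assms(10) oMin by simp
    then show ?thesis
      by (simp add: BMN_def C_def BLN_def matrix_matrix_mult_def lsum vec_eq_iff)
  qed
  have key: "det A * det BLN = (-1) ^ CARD('n) * det BMN * det BLM"
  proof -
    have "det A * det BLN = det C * det BLN * det BLM" by (simp add: A det_mul)
    also have "\<dots> = det (\<chi> i j. - (BMN$i$j)) * det BLM" by (simp add: B det_mul)
    finally show ?thesis by (simp add: det_neg_mat)
  qed
  have nz: "det BLN \<noteq> 0"
  proof -
    have "\<forall>x. (\<Sum>i\<in>UNIV. x i *s row i BLN) = 0 \<longrightarrow> (\<forall>i. x i = 0)"
    proof (intro allI impI)
      fix x :: "'n \<Rightarrow> 'a"
      assume h: "(\<Sum>i\<in>UNIV. x i *s row i BLN) = 0"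
      define v where "v = (\<Sum>p\<in>UNIV. x p *s oL p)"
      have vL: "v \<in> L" unfolding v_def L(3)[symmetric]
        by (intro vec.span_sum vec.span_scale vec.span_base) simp
      have vn: "\<omega> v (oN j) = 0" for j
      proof -
        have "(\<Sum>i\<in>UNIV. x i *s row i BLN) $ j = 0" using h by simp
        then show ?thesis
          by (simp add: v_def om_sum_left[OF sf] om_scale_left[OF sf] BLN_def row_def sum_component)
      qed
      have "\<omega> v y = 0" for y
      proof -
        obtain a b where ab: "y = a + b" "a \<in> N" "b \<in> L"
          using assms(9) unfolding general_position_def by blast
        obtain d where d: "a = (\<Sum>p\<in>UNIV. d p *s oN p)" using span_repr[OF N(1), of a] N(3) ab(2) by auto
        have "\<omega> v a = 0" by (simp add: d om_sum_right[OF sf] om_scale_right[OF sf] vn)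
        moreover have "\<omega> v b = 0" using L(4) vL ab(3) by simp
        ultimately show ?thesis by (simp add: ab(1) om_add_right[OF sf])
      qed
      then have "v = 0" using sf by (simp add: symplectic_form_def)
      then show "x i = 0" for i using indep_repr[OF L(1) L(2), of x] v_def by simp
    qed
    then have "invertible BLN"
      unfolding invertible_right_inverse matrix_right_invertible_independent_rows .
    then show ?thesis by (simp add: invertible_det_nz)
  qed
  define s :: 'a where "s = (-1) ^ (CARD('n) * (CARD('n) - 1) div 2)"
  have s2: "s * s = 1" unfolding s_def by (simp flip: power_add power_mult_distrib)
  have lhs: "omega_wedge \<omega> (r \<circ> oM) oM = s * det A" by (simp add: omega_wedge_def s_def A_def)
  have "omega_wedge \<omega> oM oN = s * det BMN" by (simp add: omega_wedge_def s_def BMN_def)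
  moreover have "omega_wedge \<omega> oL oM = s * det BLM" by (simp add: omega_wedge_def s_def BLM_def)
  moreover have "omega_wedge \<omega> oL oN = s * det BLN" by (simp add: omega_wedge_def s_def BLN_def)
  ultimately have rhs: "(-1) ^ CARD('n) * omega_wedge \<omega> oM oN * omega_wedge \<omega> oL oM
      * inverse (omega_wedge \<omega> oL oN) = s * s * ((-1) ^ CARD('n) * det BMN * det BLM) * inverse (s * det BLN)"
    by (simp add: algebra_simps)
  have sn: "s \<noteq> 0" using s2 by auto
  have invs: "inverse s = s" using s2 by (metis inverse_unique)
  have "s * s * ((-1) ^ CARD('n) * det BMN * det BLM) * inverse (s * det BLN)
      = (det A * det BLN) * inverse (det BLN) * inverse s"
    using s2 key by (simp add: inverse_mult_distrib mult.commute mult.left_commute)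
  also have "\<dots> = det A * s" using nz invs by simp
  finally have E: "s * s * ((-1) ^ CARD('n) * det BMN * det BLM) * inverse (s * det BLN) = det A * s" .
  show ?thesis unfolding lhs rhs E by (rule mult.commute)
qed

end
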